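(* In the inexact augmented Lagrangian method described in the context, for every $t\ge1$, writing $\bar d(\lambda_t):=\mathcal{L}^\beta(x_{t+1},\lambda_t)$ and $g_t:=Ax_{t+1}-b$: (a) $d(\lambda)\le\bar d(\lambda_t)+\langle g_t,\lambda-\lambda_t\rangle$ for all $\lambda\in\mathbb{R}^m$; (b) $d(\lambda_{t+1})\ge\bar d(\lambda_t)+\frac{\beta}{4}\|g_t\|^2-2\epsilon_t$.
   Context: Problem: $\min_{x\in\mathcal{X}}f(x)$ s.t. $Ax=b$, with $f:\mathbb{R}^n\to\mathbb{R}$ convex and differentiable, $\mathcal{X}\subseteq\mathbb{R}^n$ nonempty, closed, bounded and convex, $A\in\mathbb{R}^{m\times n}$, $b\in\mathbb{R}^m$. Augmented Lagrangian $\mathcal{L}^\beta(x,\lambda)=f(x)+\langle\lambda,Ax-b\rangle+\frac{\beta}{2}\|Ax-b\|^2$, $\beta>0$; dual function $d(\lambda)=\min_{x\in\mathcal{X}}\mathcal{L}^\beta(x,\lambda)$; Euclidean norms. Method: given $x_1\in\mathcal{X}$, $\lambda_1$, nonnegative $(\epsilon_t)$, for $t\ge1$ choose $x_{t+1}\in\mathcal{X}$ with $\mathcal{L}^\beta(x_{t+1},\lambda_t)-d(\lambda_t)\le\epsilon_t$ and set $\lambda_{t+1}=\lambda_t+\frac{\beta}{2}(Ax_{t+1}-b)$. *)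

theory Defs
  imports "HOL-Analysis.Analysis"
begin

definition aug_lagr ::
  "(real^'n \<Rightarrow> real) \<Rightarrow> real^'n^'m \<Rightarrow> real^'m \<Rightarrow> real \<Rightarrow> real^'n \<Rightarrow> real^'m \<Rightarrow> real" where
  "aug_lagr f A b \<beta> x l =
     f x + inner l (A *v x - b) + \<beta> / 2 * (norm (A *v x - b))\<^sup>2"

text \<open>Dual function d(lambda) = min over x in X of L^beta(x,lambda)
  (the minimum is attained since X is compact and L^beta is continuous).\<close>
definition dual_fun ::
  "(real^'n \<Rightarrow> real) \<Rightarrow> real^'n^'m \<Rightarrow> real^'m \<Rightarrow> real \<Rightarrow> (real^'n) set \<Rightarrow> real^'m \<Rightarrow> real" where
  "dual_fun f A b \<beta> X l = (INF x\<in>X. aug_lagr f A b \<beta> x l)"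

end

theory Submission
  imports Defs
begin


lemma key_ineq:
  fixes f :: "real^'n \<Rightarrow> real" and A :: "real^'n^'m"
  assumes fc: "convex_on UNIV f" and bp: "\<beta> > 0"
    and hz: "aug_lagr f A b \<beta> xh l - e \<le> aug_lagr f A b \<beta> ((1/2) *\<^sub>R y + (1/2) *\<^sub>R xh) l"
  shows "aug_lagr f A b \<beta> xh l + \<beta> / 4 * (norm (A *v xh - b))\<^sup>2 - 2 * e
     \<le> aug_lagr f A b \<beta> y (l + (\<beta> / 2) *\<^sub>R (A *v xh - b))"
proof -
  define g where "g = A *v xh - b"
  define h where "h = A *v y - b"
  have fz: "f ((1/2) *\<^sub>R y + (1/2) *\<^sub>R xh) \<le> (1/2) * f y + (1/2) * f xh"
    using convex_onD[OF fc, of "1/2" y xh] by simp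
  have hz: "A *v ((1/2) *\<^sub>R y + (1/2) *\<^sub>R xh) - b = (1/2) *\<^sub>R h + (1/2) *\<^sub>R g"
  proof -
    have bb: "b = (1/2) *\<^sub>R b + (1/2) *\<^sub>R b"
      by (metis scaleR_add_left field_sum_of_halves scaleR_one)
    show ?thesis unfolding g_def h_def
      by (subst bb) (simp add: matrix_vector_right_distrib matrix_vector_mult_scaleR scaleR_diff_right)
  qed
  have n1: "(norm ((1/2) *\<^sub>R h + (1/2) *\<^sub>R g))\<^sup>2 = (inner h h + 2 * inner h g + inner g g) / 4"
    by (simp add: power2_norm_eq_inner algebra_simps inner_commute)
  have i1: "inner l ((1/2) *\<^sub>R h + (1/2) *\<^sub>R g) = (inner l h + inner l g)/2"
    by (simp add: algebra_simps)
  have i2: "inner (l + (\<beta> / 2) *\<^sub>R g) h = inner l h + \<beta>/2 * inner h g"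
    by (simp add: algebra_simps inner_commute)
  have hh: "inner h h \<ge> 0" by simp
  have bh: "\<beta> * inner h h \<ge> 0" using bp hh by simp
  from assms(3) fz show ?thesis
    unfolding aug_lagr_def g_def[symmetric] h_def[symmetric] hz n1 i1 i2 power2_norm_eq_inner
    using bh inner_commute[of g h] by (simp add: algebra_simps) (simp add: field_simps)
qed

lemma bdd_L:
  fixes f :: "real^'n \<Rightarrow> real" and A :: "real^'n^'m"
  assumes fd: "\<And>z. f differentiable (at z)" and X: "compact X"
  shows "bdd_below ((\<lambda>x. aug_lagr f A b \<beta> x l) ` X)"
proof -
  have fcont: "continuous_on X f"
    using fd by (meson continuous_at_imp_continuous_on differentiable_imp_continuous_within)
  have "continuous_on X (\<lambda>x. aug_lagr f A b \<beta> x l)"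
    unfolding aug_lagr_def by (intro continuous_intros fcont)
  then have "compact ((\<lambda>x. aug_lagr f A b \<beta> x l) ` X)"
    using X compact_continuous_image by blast
  then show ?thesis by (simp add: bounded_imp_bdd_below compact_imp_bounded)
qed

theorem lemma9:
  fixes f :: "real^'n \<Rightarrow> real"
    and X :: "(real^'n) set"
    and A :: "real^'n^'m"
    and b :: "real^'m"
    and \<beta> :: real
    and x :: "nat \<Rightarrow> real^'n"
    and lam :: "nat \<Rightarrow> real^'m"
    and \<epsilon> :: "nat \<Rightarrow> real"
    and t :: nat
  assumes f_convex: "convex_on UNIV f"
    and f_diff: "\<And>z. f differentiable (at z)"
    and X_ne: "X \<noteq> {}" and X_closed: "closed X" and X_bdd: "bounded X" and X_convex: "convex X"
    and beta_pos: "\<beta> > 0"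
    and eps_nonneg: "\<And>s. s \<ge> 1 \<Longrightarrow> \<epsilon> s \<ge> 0"
    and x1: "x 1 \<in> X"
    and x_in: "\<And>s. s \<ge> 1 \<Longrightarrow> x (s + 1) \<in> X"
    and x_inexact: "\<And>s. s \<ge> 1 \<Longrightarrow>
          aug_lagr f A b \<beta> (x (s + 1)) (lam s) - dual_fun f A b \<beta> X (lam s) \<le> \<epsilon> s"
    and lam_upd: "\<And>s. s \<ge> 1 \<Longrightarrow> lam (s + 1) = lam s + (\<beta> / 2) *\<^sub>R (A *v x (s + 1) - b)"
    and t_ge: "t \<ge> 1"
  shows "(\<forall>\<mu>. dual_fun f A b \<beta> X \<mu> \<le>
            aug_lagr f A b \<beta> (x (t + 1)) (lam t) + inner (A *v x (t + 1) - b) (\<mu> - lam t))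
       \<and> dual_fun f A b \<beta> X (lam (t + 1)) \<ge>
            aug_lagr f A b \<beta> (x (t + 1)) (lam t) + \<beta> / 4 * (norm (A *v x (t + 1) - b))\<^sup>2 - 2 * \<epsilon> t"
proof
  have cX: "compact X" using X_closed X_bdd by (simp add: compact_eq_bounded_closed)
  have xt: "x (t+1) \<in> X" using x_in t_ge by simp
  show "\<forall>\<mu>. dual_fun f A b \<beta> X \<mu> \<le>
            aug_lagr f A b \<beta> (x (t + 1)) (lam t) + inner (A *v x (t + 1) - b) (\<mu> - lam t)"
  proof
    fix \<mu>
    have "dual_fun f A b \<beta> X \<mu> \<le> aug_lagr f A b \<beta> (x (t + 1)) \<mu>"
      unfolding dual_fun_def by (rule cINF_lower[OF bdd_L[OF f_diff cX] xt])
    also have "\<dots> = aug_lagr f A b \<beta> (x (t + 1)) (lam t) + inner (A *v x (t + 1) - b) (\<mu> - lam t)"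
      unfolding aug_lagr_def by (simp add: algebra_simps inner_commute)
    finally show "dual_fun f A b \<beta> X \<mu> \<le>
            aug_lagr f A b \<beta> (x (t + 1)) (lam t) + inner (A *v x (t + 1) - b) (\<mu> - lam t)" .
  qed
  show "dual_fun f A b \<beta> X (lam (t + 1)) \<ge>
            aug_lagr f A b \<beta> (x (t + 1)) (lam t) + \<beta> / 4 * (norm (A *v x (t + 1) - b))\<^sup>2 - 2 * \<epsilon> t"
    unfolding dual_fun_def lam_upd[OF t_ge]
  proof (rule cINF_greatest[OF X_ne])
    fix y assume y: "y \<in> X"
    have zX: "(1/2) *\<^sub>R y + (1/2) *\<^sub>R x (t+1) \<in> X"
      using convexD[OF X_convex y xt, of "1/2" "1/2"] by simp
    have "dual_fun f A b \<beta> X (lam t) \<le> aug_lagr f A b \<beta> ((1/2) *\<^sub>R y + (1/2) *\<^sub>R x (t+1)) (lam t)"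
      unfolding dual_fun_def by (rule cINF_lower[OF bdd_L[OF f_diff cX] zX])
    then have "aug_lagr f A b \<beta> (x (t+1)) (lam t) - \<epsilon> t \<le> aug_lagr f A b \<beta> ((1/2) *\<^sub>R y + (1/2) *\<^sub>R x (t+1)) (lam t)"
      using x_inexact[OF t_ge] by linarith
    from key_ineq[OF f_convex beta_pos this]
    show "aug_lagr f A b \<beta> (x (t + 1)) (lam t) + \<beta> / 4 * (norm (A *v x (t + 1) - b))\<^sup>2 - 2 * \<epsilon> t
      \<le> aug_lagr f A b \<beta> y (lam t + (\<beta> / 2) *\<^sub>R (A *v x (t + 1) - b))" .
  qed
qed

end
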